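(* Let $p$ be a prime, $d\ge1$ an integer and $G\cong\mathbb{Z}_p^d$. Then for every non-empty subset $A$ of $]p-1[=\{1,\dots,p-1\}$, \[ d_A(G)\le\left\lceil\frac{d(p-1)+1}{|A|}\right\rceil . \]
   Context: For an integer $x\ge1$, $]x[=\{1,2,\dots,x\}$. Let $G$ be a finite abelian group (written additively) of exponent $n$ and let $\emptyset\ne A\subseteq\, ]n[$. The constant $d_A(G)$ is the least positive integer $t$ such that for every sequence $g_1,\dots,g_t$ of (not necessarily distinct) elements of $G$ there exist $\ell\ge1$, indices $1\le i_1<\dots<i_\ell\le t$ and elements $a_1,\dots,a_\ell\in A$ (repetitions allowed) with $\sum_{j=1}^{\ell}a_j g_{i_j}=0$ in $G$. $\lceil x\rceil$ denotes the smallest integer $\ge x$. *)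

theory Defs
  imports "HOL-Algebra.Algebra"
begin

text \<open>The constant d_A(G) for a (commutative) group G written multiplicatively in
HOL-Algebra (group operation plays the role of addition, the unit the role of 0,
and nat powers the role of integer multiples a*g).  A sequence g_1,...,g_t is
modelled by a function on the index set {..<t}.\<close>

definition dA :: "nat set \<Rightarrow> ('g, 'b) monoid_scheme \<Rightarrow> nat" where
  "dA A G = (LEAST t. t \<ge> 1 \<and>
      (\<forall>g \<in> {..<t} \<rightarrow> carrier G.
         \<exists>I. I \<subseteq> {..<t} \<and> I \<noteq> {} \<and>
           (\<exists>a \<in> I \<rightarrow> A. finprod G (\<lambda>i. g i [^]\<^bsub>G\<^esub> a i) I = \<one>\<^bsub>G\<^esub>)))"

definition Zpd :: "nat \<Rightarrow> nat \<Rightarrow> (nat \<Rightarrow> int) monoid" where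
  "Zpd p d = product_group {..<d} (\<lambda>_. integer_mod_group p)"

end

theory Submission
  imports Defs "HOL-Number_Theory.Number_Theory" "HOL-Library.FuncSet"
begin


lemma fermat_int:
  fixes L :: int and p :: nat
  assumes "Factorial_Ring.prime p" "\<not> int p dvd L"
  shows "int p dvd L ^ (p - 1) - 1"
proof -
  have pp: "p > 0" using assms prime_gt_0_nat by blast
  define L' where "L' = nat (L mod int p)"
  have L'eq: "int L' = L mod int p" using pp unfolding L'_def by simp
  have "\<not> p dvd L'"
  proof
    assume "p dvd L'"
    then have "int p dvd int L'" by simp
    then have "int p dvd L mod int p" using L'eq by simp
    then show False using assms(2) by (simp add: dvd_mod_iff)
  qed
  then have "[L' ^ (p - 1) = 1] (mod p)" using fermat_theorem assms(1) by blast
  then have "[int L' ^ (p - 1) = 1] (mod int p)"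
    by (metis cong_int_iff of_nat_1 of_nat_power)
  moreover have "[int L' = L] (mod int p)" using L'eq by (simp add: cong_def)
  then have "[int L' ^ (p - 1) = L ^ (p - 1)] (mod int p)" by (rule cong_pow)
  ultimately have "[L ^ (p - 1) = 1] (mod int p)"
    by (meson cong_sym cong_trans)
  then show ?thesis by (simp add: cong_iff_dvd_diff)
qed

lemma power_sum_nat:
  fixes p e :: nat
  assumes "Factorial_Ring.prime p" "e < p - 1"
  shows "p dvd (\<Sum>y<p. y ^ e)"
proof (cases "e = 0")
  case True then show ?thesis by simp
next
  case False
  have p1: "p > 1" using assms prime_gt_1_nat by blast
  obtain g where g: "g \<in> totatives p" "ord p g = p - 1"
    using residue_prime_has_primroot[OF assms(1)] by blast
  have cop: "coprime g p" using g(1) by (simp add: totatives_def)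
  define f where "f y = (g * y) mod p" for y
  have inj: "inj_on f {..<p}"
  proof
    fix x y assume xy: "x \<in> {..<p}" "y \<in> {..<p}" "f x = f y"
    then have "[g * x = g * y] (mod p)" by (simp add: f_def cong_def)
    then have "[x = y] (mod p)" using cop
      by (metis cong_mult_lcancel_nat coprime_commute)
    then show "x = y" using xy by (simp add: cong_def)
  qed
  have img: "f ` {..<p} = {..<p}"
    by (rule endo_inj_surj) (use inj p1 in \<open>auto simp: f_def\<close>)
  define S where "S = (\<Sum>y<p. y ^ e)"
  have S1: "S = (\<Sum>y<p. f y ^ e)"
    using sum.reindex[OF inj, of "\<lambda>y. y ^ e"] img unfolding S_def by simp
  have S2: "[(\<Sum>y<p. f y ^ e) = (\<Sum>y<p. g ^ e * y ^ e)] (mod p)"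
    by (rule cong_sum) (simp add: f_def cong_def power_mod power_mult_distrib)
  have c: "[S = g ^ e * S] (mod p)"
    using S2 unfolding S1[symmetric] by (simp add: S_def sum_distrib_left)
  have ng: "\<not> [g ^ e = 1] (mod p)"
  proof
    assume "[g ^ e = 1] (mod p)"
    then have "ord p g dvd e" using ord_divides by blast
    then show False using g(2) False assms(2) by (simp add: dvd_imp_le nat_dvd_not_less)
  qed
  have "[int S = int (g ^ e) * int S] (mod int p)" using c
    by (metis cong_int_iff of_nat_mult)
  then have "[int (g ^ e) * int S = int S] (mod int p)" by (rule cong_sym)
  then have "int p dvd (int (g ^ e) - 1) * int S"
    by (simp add: cong_iff_dvd_diff left_diff_distrib)
  moreover have "\<not> int p dvd (int (g ^ e) - 1)"
    using ng by (metis cong_iff_dvd_diff cong_int_iff of_nat_1)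
  moreover have "Factorial_Ring.prime (int p)" using assms(1) by simp
  ultimately have "int p dvd int S"
    using prime_dvd_mult_iff by blast
  then have "p dvd S" by (simp only: int_dvd_int_iff)
  then show ?thesis unfolding S_def .
qed

lemma power_sum_int:
  fixes p e :: nat
  assumes "Factorial_Ring.prime p" "e < p - 1"
  shows "int p dvd (\<Sum>y\<in>{0..<int p}. y ^ e)"
proof -
  have "(\<Sum>y\<in>{0..<int p}. y ^ e) = (\<Sum>y<p. int y ^ e)"
  proof -
    have "{0..<int p} = int ` {..<p}"
      using image_int_atLeastLessThan[of 0 p] by (simp add: lessThan_atLeast0)
    then show ?thesis by (simp add: sum.reindex)
  qed
  also have "\<dots> = int (\<Sum>y<p. y ^ e)" by simp
  finally show ?thesis using power_sum_nat[OF assms]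
    by (metis int_dvd_int_iff)
qed




definition monv :: "nat \<Rightarrow> (nat \<Rightarrow> nat) \<Rightarrow> (nat \<Rightarrow> int) \<Rightarrow> int" where
  "monv t e x = (\<Prod>i<t. x i ^ e i)"

definition repL :: "nat \<Rightarrow> (int \<times> (nat \<Rightarrow> nat)) list \<Rightarrow> (nat \<Rightarrow> int) \<Rightarrow> int" where
  "repL t L x = (\<Sum>ce\<leftarrow>L. fst ce * monv t (snd ce) x)"

definition lowdeg :: "nat \<Rightarrow> nat \<Rightarrow> ((nat \<Rightarrow> int) \<Rightarrow> int) \<Rightarrow> bool" where
  "lowdeg t N f \<longleftrightarrow> (\<exists>L. (\<forall>ce\<in>set L. (\<Sum>i<t. snd ce i) \<le> N) \<and> f = repL t L)"

definition mulL :: "(int \<times> (nat \<Rightarrow> nat)) list \<Rightarrow> (int \<times> (nat \<Rightarrow> nat)) list \<Rightarrow> (int \<times> (nat \<Rightarrow> nat)) list" where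
  "mulL L1 L2 = concat (map (\<lambda>ce1. map (\<lambda>ce2. (fst ce1 * fst ce2, \<lambda>i. snd ce1 i + snd ce2 i)) L2) L1)"

lemma repL_Nil[simp]: "repL t [] x = 0" by (simp add: repL_def)
lemma repL_Cons[simp]: "repL t (ce # L) x = fst ce * monv t (snd ce) x + repL t L x" by (simp add: repL_def)
lemma repL_append[simp]: "repL t (L1 @ L2) x = repL t L1 x + repL t L2 x" by (simp add: repL_def)

lemma monv_add: "monv t (\<lambda>i. e1 i + e2 i) x = monv t e1 x * monv t e2 x"
  by (simp add: monv_def power_add prod.distrib)

lemma repL_map: "repL t (map (\<lambda>ce2. (c * fst ce2, \<lambda>i. e i + snd ce2 i)) L2) x = c * monv t e x * repL t L2 x"
  by (induction L2) (auto simp: monv_add algebra_simps)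

lemma repL_mulL: "repL t (mulL L1 L2) x = repL t L1 x * repL t L2 x"
  unfolding mulL_def
proof (induction L1)
  case Nil then show ?case by simp
next
  case (Cons ce L1)
  have "repL t (map (\<lambda>ce2. (fst ce * fst ce2, \<lambda>i. snd ce i + snd ce2 i)) L2) x
        = fst ce * monv t (snd ce) x * repL t L2 x" by (rule repL_map)
  then show ?case using Cons by (simp add: algebra_simps)
qed

lemma lowdeg_const: "lowdeg t N (\<lambda>x. c)"
  unfolding lowdeg_def by (rule exI[of _ "[(c, \<lambda>_. 0)]"]) (auto simp: monv_def)

lemma lowdeg_var: assumes "i < t" "1 \<le> N" shows "lowdeg t N (\<lambda>x. x i)"
proof -
  define e where "e = (\<lambda>j. if j = i then 1 else (0::nat))"
  have "(\<Sum>j<t. e j) = 1" using assms by (simp add: e_def)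
  moreover have "monv t e x = x i" for x
  proof -
    have "monv t e x = (\<Prod>j<t. if j = i then x j else 1)"
      unfolding monv_def e_def by (rule prod.cong) auto
    then show ?thesis using assms by simp
  qed
  ultimately show ?thesis unfolding lowdeg_def using assms
    by (intro exI[of _ "[(1, e)]"]) auto
qed

lemma lowdeg_add: "lowdeg t N f \<Longrightarrow> lowdeg t N g \<Longrightarrow> lowdeg t N (\<lambda>x. f x + g x)"
  unfolding lowdeg_def
proof (elim exE conjE)
  fix L1 L2 assume "\<forall>ce\<in>set L1. (\<Sum>i<t. snd ce i) \<le> N" "f = repL t L1"
    "\<forall>ce\<in>set L2. (\<Sum>i<t. snd ce i) \<le> N" "g = repL t L2"
  then show "\<exists>L. (\<forall>ce\<in>set L. (\<Sum>i<t. snd ce i) \<le> N) \<and> (\<lambda>x. f x + g x) = repL t L"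
    by (intro exI[of _ "L1 @ L2"]) auto
qed

lemma lowdeg_mult: "lowdeg t N f \<Longrightarrow> lowdeg t M g \<Longrightarrow> lowdeg t (N + M) (\<lambda>x. f x * g x)"
  unfolding lowdeg_def
proof (elim exE conjE)
  fix L1 L2 assume a: "\<forall>ce\<in>set L1. (\<Sum>i<t. snd ce i) \<le> N" "f = repL t L1"
    "\<forall>ce\<in>set L2. (\<Sum>i<t. snd ce i) \<le> M" "g = repL t L2"
  have "\<forall>ce\<in>set (mulL L1 L2). (\<Sum>i<t. snd ce i) \<le> N + M"
    using a(1,3) by (fastforce simp: mulL_def sum.distrib intro: add_mono)
  moreover have "(\<lambda>x. f x * g x) = repL t (mulL L1 L2)"
    using a(2,4) by (simp add: repL_mulL fun_eq_iff)
  ultimately show "\<exists>L. (\<forall>ce\<in>set L. (\<Sum>i<t. snd ce i) \<le> N + M) \<and> (\<lambda>x. f x * g x) = repL t L"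
    by blast
qed

lemma lowdeg_mono: "lowdeg t N f \<Longrightarrow> N \<le> M \<Longrightarrow> lowdeg t M f"
  unfolding lowdeg_def by (blast intro: order_trans)

lemma lowdeg_sum: "finite I \<Longrightarrow> (\<And>i. i \<in> I \<Longrightarrow> lowdeg t N (f i)) \<Longrightarrow> lowdeg t N (\<lambda>x. \<Sum>i\<in>I. f i x)"
proof (induction I rule: finite_induct)
  case empty then show ?case by (simp add: lowdeg_const)
next
  case (insert a I)
  then show ?case using lowdeg_add[of t N "f a" "\<lambda>x. \<Sum>i\<in>I. f i x"] by simp
qed

lemma lowdeg_prod: "finite I \<Longrightarrow> (\<And>i. i \<in> I \<Longrightarrow> lowdeg t N (f i)) \<Longrightarrow> lowdeg t (card I * N) (\<lambda>x. \<Prod>i\<in>I. f i x)"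
proof (induction I rule: finite_induct)
  case empty then show ?case by (simp add: lowdeg_const)
next
  case (insert a I)
  then show ?case using lowdeg_mult[of t N "f a" "card I * N" "\<lambda>x. \<Prod>i\<in>I. f i x"] by simp
qed

lemma lowdeg_pow: "lowdeg t N f \<Longrightarrow> lowdeg t (k * N) (\<lambda>x. f x ^ k)"
proof (induction k)
  case 0 then show ?case by (simp add: lowdeg_const)
next
  case (Suc k)
  then show ?case using lowdeg_mult[of t N f "k * N" "\<lambda>x. f x ^ k"] by simp
qed

lemma sum_mon_box:
  assumes "Factorial_Ring.prime p" "(\<Sum>i<t. e i) < t * (p - 1)"
  shows "int p dvd (\<Sum>x\<in>PiE {..<t} (\<lambda>_. {0..<int p}). monv t e x)"
proof -
  have "(\<Sum>x\<in>PiE {..<t} (\<lambda>_. {0..<int p}). monv t e x) = (\<Prod>i<t. \<Sum>y\<in>{0..<int p}. y ^ e i)"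
    unfolding monv_def by (subst prod_sum_PiE) auto
  moreover obtain i where i: "i < t" "e i < p - 1"
  proof (rule ccontr)
    assume "\<not> thesis"
    then have "\<forall>i\<in>{..<t}. p - 1 \<le> e i" using that by force
    then have "of_nat (card {..<t}) * (p - 1) \<le> (\<Sum>i<t. e i)"
      using sum_bounded_below[of "{..<t}" "p - 1" e] by blast
    then show False using assms(2) by (simp add: mult.commute)
  qed
  moreover have "(\<Sum>y\<in>{0..<int p}. y ^ e i) dvd (\<Prod>i<t. \<Sum>y\<in>{0..<int p}. y ^ e i)"
    by (rule dvd_prodI) (use i in auto)
  ultimately show ?thesis
    using power_sum_int[OF assms(1) i(2)] dvd_trans by metis
qed

lemma lowdeg_sum_box:
  assumes "Factorial_Ring.prime p" "lowdeg t N f" "N < t * (p - 1)"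
  shows "int p dvd (\<Sum>x\<in>PiE {..<t} (\<lambda>_. {0..<int p}). f x)"
proof -
  obtain L where L: "\<forall>ce\<in>set L. (\<Sum>i<t. snd ce i) \<le> N" "f = repL t L"
    using assms(2) unfolding lowdeg_def by blast
  have "int p dvd (\<Sum>x\<in>PiE {..<t} (\<lambda>_. {0..<int p}). repL t L x)" using L(1)
  proof (induction L)
    case Nil then show ?case by simp
  next
    case (Cons ce L)
    have "int p dvd (\<Sum>x\<in>PiE {..<t} (\<lambda>_. {0..<int p}). monv t (snd ce) x)"
      using sum_mon_box[OF assms(1)] Cons.prems assms(3) by force
    then have "int p dvd (\<Sum>x\<in>PiE {..<t} (\<lambda>_. {0..<int p}). fst ce * monv t (snd ce) x)"
      by (simp add: sum_distrib_left[symmetric])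
    then show ?case using Cons by (simp add: sum.distrib)
  qed
  then show ?thesis using L(2) by simp
qed




lemma lowdeg_cong: "lowdeg t N f \<Longrightarrow> (\<And>x. f x = g x) \<Longrightarrow> lowdeg t N g"
proof -
  assume "lowdeg t N f" "\<And>x. f x = g x"
  moreover have "f = g" using \<open>\<And>x. f x = g x\<close> by (rule ext)
  ultimately show ?thesis by simp
qed

lemma comb:
  fixes p T d :: nat and A :: "nat set" and v :: "nat \<Rightarrow> nat \<Rightarrow> int"
  assumes pr: "Factorial_Ring.prime p" and A: "A \<subseteq> {1..p-1}" and big: "d * (p - 1) < T * card A"
  shows "\<exists>c\<in>PiE {..<T} (\<lambda>_. insert 0 (int ` A)). (\<exists>i<T. c i \<noteq> 0) \<and>
           (\<forall>j<d. int p dvd (\<Sum>i<T. c i * v i j))"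
proof (rule ccontr)
  assume H: "\<not> ?thesis"
  have p1: "p > 1" using pr prime_gt_1_nat by blast
  define S where "S = insert 0 (int ` A)"
  define B where "B = {0..<int p} - S"
  define k where "k = card A"
  have finA: "finite A" using A finite_subset by blast
  have SP: "S \<subseteq> {0..<int p}" using A p1 by (fastforce simp: S_def)
  have "0 \<notin> int ` A" using A by auto
  then have cS: "card S = k + 1" using finA by (simp add: S_def k_def card_image)
  have cB: "card B = p - (k + 1)" unfolding B_def using SP cS
    by (simp add: card_Diff_subset finite_subset)
  have kp: "k \<le> p - 1" unfolding k_def using card_mono[OF _ A] by simp
  have cB2: "p - 1 = card B + k" using cB kp p1 by simp
  define u where "u y = (\<Prod>b\<in>B. (y - b))" for y :: int
  define L where "L x j = (\<Sum>i<T. v i j * x i)" for x :: "nat \<Rightarrow> int" and j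
  define F where "F x = (\<Prod>i<T. u (x i)) * (\<Prod>j<d. 1 - L x j ^ (p - 1))" for x
  have finB: "finite B" by (simp add: B_def)
  have H': "\<exists>j<d. \<not> int p dvd L c j" if "c \<in> PiE {..<T} (\<lambda>_. S)" "\<exists>i<T. c i \<noteq> 0" for c
  proof (rule ccontr)
    assume "\<not> (\<exists>j<d. \<not> int p dvd L c j)"
    then have "\<forall>j<d. int p dvd (\<Sum>i<T. c i * v i j)" by (simp add: L_def mult.commute)
    then show False using H that unfolding S_def by blast
  qed
  have d1: "lowdeg T (T * (card B * 1)) (\<lambda>x. \<Prod>i<T. u (x i))"
  proof -
    have "lowdeg T (card {..<T} * (card B * 1)) (\<lambda>x. \<Prod>i\<in>{..<T}. u (x i))"
    proof (rule lowdeg_prod)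
      fix i assume i: "i \<in> {..<T}"
      have "lowdeg T (card B * 1) (\<lambda>x. \<Prod>b\<in>B. (x i - b))"
      proof (rule lowdeg_prod[OF finB])
        fix b
        have "lowdeg T 1 (\<lambda>x. x i + (- b))"
          by (rule lowdeg_add) (use i in \<open>auto intro: lowdeg_var lowdeg_const\<close>)
        then show "lowdeg T 1 (\<lambda>x. x i - b)" by simp
      qed
      then show "lowdeg T (card B * 1) (\<lambda>x. u (x i))" by (simp add: u_def)
    qed simp
    then show ?thesis by simp
  qed
  have d2: "lowdeg T (d * ((p - 1) * 1)) (\<lambda>x. \<Prod>j<d. 1 - L x j ^ (p - 1))"
  proof -
    have "lowdeg T (card {..<d} * ((p - 1) * 1)) (\<lambda>x. \<Prod>j\<in>{..<d}. 1 - L x j ^ (p - 1))"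
    proof (rule lowdeg_prod)
      fix j
      have "lowdeg T 1 (\<lambda>x. \<Sum>i\<in>{..<T}. v i j * x i)"
      proof (rule lowdeg_sum)
        fix i assume i: "i \<in> {..<T}"
        have "lowdeg T (0 + 1) (\<lambda>x. v i j * x i)"
          by (rule lowdeg_mult) (use i in \<open>auto intro: lowdeg_var lowdeg_const\<close>)
        then show "lowdeg T 1 (\<lambda>x. v i j * x i)" by simp
      qed simp
      then have "lowdeg T ((p - 1) * 1) (\<lambda>x. L x j ^ (p - 1))"
        unfolding L_def by (rule lowdeg_pow)
      then have "lowdeg T (0 + (p - 1) * 1) (\<lambda>x. (-1) * L x j ^ (p - 1))"
        by (intro lowdeg_mult lowdeg_const)
      then have "lowdeg T ((p - 1) * 1) (\<lambda>x. 1 + (-1) * L x j ^ (p - 1))"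
        by (intro lowdeg_add lowdeg_const) simp
      then show "lowdeg T ((p - 1) * 1) (\<lambda>x. 1 - L x j ^ (p - 1))" by simp
    qed simp
    then show ?thesis by simp
  qed
  have dF: "lowdeg T (T * (card B * 1) + d * ((p - 1) * 1)) F"
    unfolding F_def by (rule lowdeg_mult[OF d1 d2])
  have TT: "T * (p - 1) = T * card B + T * k" using cB2 by (simp add: distrib_left)
  have "T * (card B * 1) + d * ((p - 1) * 1) < T * (p - 1)"
    unfolding TT using big by (simp add: k_def)
  then have dvdsum: "int p dvd (\<Sum>x\<in>PiE {..<T} (\<lambda>_. {0..<int p}). F x)"
    by (rule lowdeg_sum_box[OF pr dF])
  define box where "box = PiE {..<T} (\<lambda>_. {0..<int p})"
  define x0 where "x0 = (\<lambda>i\<in>{..<T}. (0::int))"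
  have x0box: "x0 \<in> box" using p1 by (auto simp: box_def x0_def)
  have others: "int p dvd F x" if x: "x \<in> box - {x0}" for x
  proof (cases "\<exists>i<T. x i \<notin> S")
    case True
    then obtain i where i: "i < T" "x i \<notin> S" by blast
    have "x i \<in> {0..<int p}" using x i(1) by (auto simp: box_def PiE_iff)
    then have "x i \<in> B" using i(2) by (simp add: B_def)
    then have "u (x i) = 0" unfolding u_def using finB by (intro prod_zero) auto
    then have "(\<Prod>i<T. u (x i)) = 0" using i(1) by (intro prod_zero) auto
    then show ?thesis unfolding F_def by (metis dvd_0_right mult_zero_left)
  next
    case False
    then have xS: "x \<in> PiE {..<T} (\<lambda>_. S)" using x by (auto simp: box_def PiE_iff)
    have "\<exists>i<T. x i \<noteq> 0"
    proof (rule ccontr)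
      assume "\<not> (\<exists>i<T. x i \<noteq> 0)"
      then have "x = x0"
        by (intro PiE_ext[of x "{..<T}" "\<lambda>_. {0..<int p}" x0]) (use x x0box in \<open>auto simp: box_def x0_def\<close>)
      then show False using x by simp
    qed
    then obtain j where j: "j < d" "\<not> int p dvd L x j"
      using H' xS by blast
    have "int p dvd L x j ^ (p - 1) - 1" by (rule fermat_int[OF pr j(2)])
    moreover have "1 - L x j ^ (p - 1) = - (L x j ^ (p - 1) - 1)" by simp
    ultimately have "int p dvd 1 - L x j ^ (p - 1)"
      by (simp only: dvd_minus_iff)
    moreover have "(1 - L x j ^ (p - 1)) dvd (\<Prod>j<d. 1 - L x j ^ (p - 1))"
      by (rule dvd_prodI) (use j in auto)
    ultimately have "int p dvd (\<Prod>j<d. 1 - L x j ^ (p - 1))" by (rule dvd_trans)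
    then show ?thesis unfolding F_def by (rule dvd_mult)
  qed
  have finbox: "finite box" by (simp add: box_def finite_PiE)
  have "(\<Sum>x\<in>box. F x) = F x0 + (\<Sum>x\<in>box - {x0}. F x)"
    using sum.remove[OF finbox x0box] by simp
  moreover have "int p dvd (\<Sum>x\<in>box - {x0}. F x)" using others by (rule dvd_sum)
  ultimately have "int p dvd F x0" using dvdsum unfolding box_def[symmetric]
    using dvd_add_left_iff by metis
  moreover have "F x0 = u 0 ^ T"
  proof -
    have L0: "L x0 j = 0" for j unfolding L_def x0_def by simp
    have pz: "p - 1 \<noteq> 0" using p1 by simp
    have one: "1 - L x0 j ^ (p - 1) = 1" for j unfolding L0 using pz by simp
    have "(\<Prod>j<d. 1 - L x0 j ^ (p - 1)) = 1" by (rule prod.neutral) (use one in blast)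
    moreover have "(\<Prod>i<T. u (x0 i)) = u 0 ^ T" unfolding x0_def by simp
    ultimately show ?thesis unfolding F_def by simp
  qed
  ultimately have pu: "int p dvd u 0 ^ T" by simp
  have prI: "Factorial_Ring.prime (int p)" using pr by simp
  have "int p dvd u 0" by (rule prime_dvd_power[OF prI pu])
  then obtain b where b: "b \<in> B" "int p dvd (0 - b)"
    unfolding u_def using prime_dvd_prod_iff[OF finB prI] by blast
  have "0 < b" "b < int p" using b(1) by (auto simp: B_def S_def)
  then show False using b(2) by (simp add: zdvd_not_zless)
qed




lemma Zpd_facts:
  assumes "p > 0"
  shows "group (Zpd p d)"
    and "carrier (Zpd p d) = PiE {..<d} (\<lambda>_. {0..<int p})"
    and "one (Zpd p d) = (\<lambda>j\<in>{..<d}. 0)"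
    and "\<And>x y. x \<otimes>\<^bsub>Zpd p d\<^esub> y = (\<lambda>j\<in>{..<d}. (x j + y j) mod int p)"
  using assms by (auto simp: Zpd_def carrier_integer_mod_group)

lemma hom_pow_Zpd:
  assumes "group G" "h \<in> hom G (Zpd p d)" "p > 0" "g \<in> carrier G"
  shows "h (g [^]\<^bsub>G\<^esub> n) = (\<lambda>j\<in>{..<d}. (int n * h g j) mod int p)"
proof (induction n)
  case 0
  have "h (g [^]\<^bsub>G\<^esub> (0::nat)) = one (Zpd p d)"
    using hom_one[OF assms(2) assms(1) Zpd_facts(1)[OF assms(3)]] by simp
  then show ?case using Zpd_facts(3)[OF assms(3)] by simp
next
  case (Suc n)
  interpret G: group G by (rule assms(1))
  have "h (g [^]\<^bsub>G\<^esub> Suc n) = h (g [^]\<^bsub>G\<^esub> n) \<otimes>\<^bsub>Zpd p d\<^esub> h g"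
    using hom_mult[OF assms(2)] assms(4) by simp
  also have "\<dots> = (\<lambda>j\<in>{..<d}. (int (Suc n) * h g j) mod int p)"
    unfolding Zpd_facts(4)[OF assms(3)] Suc
    by (rule restrict_ext) (simp add: mod_add_right_eq algebra_simps)
  finally show ?case .
qed

lemma hom_finprod_Zpd:
  assumes "comm_group G" "h \<in> hom G (Zpd p d)" "p > 0"
  shows "finite I \<Longrightarrow> f \<in> I \<rightarrow> carrier G \<Longrightarrow>
    h (finprod G f I) = (\<lambda>j\<in>{..<d}. (\<Sum>i\<in>I. h (f i) j) mod int p)"
proof (induction I rule: finite_induct)
  case empty
  interpret G: comm_group G by (rule assms(1))
  have "h (finprod G f {}) = one (Zpd p d)"
    using hom_one[OF assms(2) G.is_group Zpd_facts(1)[OF assms(3)]] by simp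
  then show ?case using Zpd_facts(3)[OF assms(3)] by simp
next
  case (insert a I)
  interpret G: comm_group G by (rule assms(1))
  have fa: "f a \<in> carrier G" and fI: "f \<in> I \<rightarrow> carrier G" using insert.prems by auto
  have "h (finprod G f (insert a I)) = h (f a \<otimes>\<^bsub>G\<^esub> finprod G f I)"
    using insert.hyps fa fI by simp
  also have "\<dots> = h (f a) \<otimes>\<^bsub>Zpd p d\<^esub> h (finprod G f I)"
    using hom_mult[OF assms(2)] fa fI by simp
  also have "\<dots> = (\<lambda>j\<in>{..<d}. (\<Sum>i\<in>insert a I. h (f i) j) mod int p)"
    unfolding Zpd_facts(4)[OF assms(3)] insert.IH[OF fI]
    by (rule restrict_ext) (simp add: insert.hyps mod_add_right_eq)
  finally show ?case .
qed

lemma dA_bound: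
  fixes G :: "('g, 'b) monoid_scheme" and p d T :: nat and A :: "nat set"
  assumes pr: "Factorial_Ring.prime p" and T1: "T \<ge> 1"
    and cg: "comm_group G" and iso: "G \<cong> Zpd p d"
    and A: "A \<subseteq> {1..p-1}" and big: "d * (p - 1) < T * card A"
  shows "dA A G \<le> T"
proof -
  interpret G: comm_group G by (rule cg)
  have p0: "p > 0" using pr prime_gt_0_nat by blast
  obtain h where h: "h \<in> iso G (Zpd p d)" using iso unfolding is_iso_def by blast
  have hh: "h \<in> hom G (Zpd p d)" and inj: "inj_on h (carrier G)"
    using h unfolding iso_def bij_betw_def by auto
  have prp: "\<forall>g \<in> {..<T} \<rightarrow> carrier G.
         \<exists>I. I \<subseteq> {..<T} \<and> I \<noteq> {} \<and>
           (\<exists>a \<in> I \<rightarrow> A. finprod G (\<lambda>i. g i [^]\<^bsub>G\<^esub> a i) I = \<one>\<^bsub>G\<^esub>)"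
  proof
    fix g assume g: "g \<in> {..<T} \<rightarrow> carrier G"
    define v where "v i j = h (g i) j" for i j
    obtain c where c: "c \<in> PiE {..<T} (\<lambda>_. insert 0 (int ` A))" "\<exists>i<T. c i \<noteq> 0"
      "\<forall>j<d. int p dvd (\<Sum>i<T. c i * v i j)"
      using comb[OF pr A big, of v] by blast
    define I where "I = {i\<in>{..<T}. c i \<noteq> 0}"
    define a where "a i = nat (c i)" for i
    have I1: "I \<subseteq> {..<T}" "I \<noteq> {}" using c(2) by (auto simp: I_def)
    have cA: "c i \<in> insert 0 (int ` A)" if "i < T" for i using c(1) that by (auto simp: PiE_iff)
    have aA: "a \<in> I \<rightarrow> A"
    proof
      fix i assume "i \<in> I"
      then have "i < T" "c i \<noteq> 0" by (auto simp: I_def)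
      then have "c i \<in> int ` A" using cA by blast
      then show "a i \<in> A" by (auto simp: a_def)
    qed
    have cnn: "c i \<ge> 0" if "i < T" for i using cA[OF that] by auto
    have fin: "finite I" using I1 finite_subset by blast
    have gI: "(\<lambda>i. g i [^]\<^bsub>G\<^esub> a i) \<in> I \<rightarrow> carrier G" using g I1 by auto
    define P where "P = finprod G (\<lambda>i. g i [^]\<^bsub>G\<^esub> a i) I"
    have Pc: "P \<in> carrier G" unfolding P_def using gI by simp
    have "h P = (\<lambda>j\<in>{..<d}. (\<Sum>i\<in>I. h (g i [^]\<^bsub>G\<^esub> a i) j) mod int p)"
      unfolding P_def by (rule hom_finprod_Zpd[OF cg hh p0 fin gI])
    also have "\<dots> = (\<lambda>j\<in>{..<d}. 0)"
    proof (rule restrict_ext)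
      fix j assume j: "j \<in> {..<d}"
      have "(\<Sum>i\<in>I. h (g i [^]\<^bsub>G\<^esub> a i) j) mod int p
          = (\<Sum>i\<in>I. (int (a i) * v i j) mod int p) mod int p"
      proof -
        have hp: "h (g i [^]\<^bsub>G\<^esub> a i) j = (int (a i) * v i j) mod int p" if "i \<in> I" for i
        proof -
          have "g i \<in> carrier G" using g I1 that by auto
          then show ?thesis using j by (simp add: hom_pow_Zpd[OF G.is_group hh p0] v_def)
        qed
        show ?thesis using hp by (intro arg_cong2[where f="(mod)"] sum.cong refl) auto
      qed
      also have "\<dots> = (\<Sum>i\<in>I. int (a i) * v i j) mod int p" by (rule mod_sum_eq)
      also have "(\<Sum>i\<in>I. int (a i) * v i j) = (\<Sum>i<T. c i * v i j)"
      proof (rule sum.mono_neutral_cong_left)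
        show "finite {..<T}" by simp
        show "I \<subseteq> {..<T}" by (rule I1(1))
        show "\<forall>i\<in>{..<T} - I. c i * v i j = 0" by (auto simp: I_def)
        show "\<And>x. x \<in> I \<Longrightarrow> int (a x) * v x j = c x * v x j"
          using cnn by (auto simp: I_def a_def)
      qed
      finally show "(\<Sum>i\<in>I. h (g i [^]\<^bsub>G\<^esub> a i) j) mod int p = 0"
        using c(3) j by simp
    qed
    also have "\<dots> = h \<one>\<^bsub>G\<^esub>"
      using hom_one[OF hh G.is_group Zpd_facts(1)[OF p0]] Zpd_facts(3)[OF p0] by simp
    finally have "P = \<one>\<^bsub>G\<^esub>" using inj Pc by (simp add: inj_on_eq_iff)
    then show "\<exists>I. I \<subseteq> {..<T} \<and> I \<noteq> {} \<and>
           (\<exists>a \<in> I \<rightarrow> A. finprod G (\<lambda>i. g i [^]\<^bsub>G\<^esub> a i) I = \<one>\<^bsub>G\<^esub>)"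
      using I1 aA unfolding P_def by blast
  qed
  show ?thesis unfolding dA_def
    by (rule Least_le) (use T1 prp in blast)
qed

theorem corollary1p1:
  fixes G :: "('g, 'b) monoid_scheme" and p d :: nat and A :: "nat set"
  assumes "Factorial_Ring.prime p" and "d \<ge> 1"
    and "comm_group G" and "G \<cong> Zpd p d"
    and "A \<subseteq> {1..p-1}" and "A \<noteq> {}"
  shows "int (dA A G) \<le> \<lceil>real (d * (p - 1) + 1) / real (card A)\<rceil>"
proof -
  define r where "r = real (d * (p - 1) + 1) / real (card A)"
  have finA: "finite A" using assms(5) finite_subset by blast
  have k0: "card A > 0" using finA assms(6) by (simp add: card_gt_0_iff)
  have np: "real (d * (p - 1) + 1) > 0" by (simp only: of_nat_0_less_iff)
  have rpos: "r > 0" unfolding r_def using k0 np by (intro divide_pos_pos) auto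
  define T where "T = nat \<lceil>r\<rceil>"
  have cpos: "\<lceil>r\<rceil> \<ge> 1" using rpos by simp
  have Tc: "int T = \<lceil>r\<rceil>" unfolding T_def using cpos by simp
  have T1: "T \<ge> 1" using Tc cpos by linarith
  have "r \<le> real T" using Tc le_of_int_ceiling[of r] by (metis of_int_of_nat_eq)
  then have "real (d * (p - 1) + 1) \<le> real T * real (card A)"
    unfolding r_def using k0 by (simp add: divide_le_eq)
  then have "d * (p - 1) + 1 \<le> T * card A"
    by (metis of_nat_le_iff of_nat_mult)
  then have big: "d * (p - 1) < T * card A" by simp
  have "dA A G \<le> T" by (rule dA_bound[OF assms(1) T1 assms(3) assms(4) assms(5) big])
  then show ?thesis using Tc unfolding r_def by linarith
qed


end
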